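(* Let $N,d\in\mathbb{N}^+$, let $\Gamma\in\mathbb{R}^{N\times N}$ be symmetric positive semidefinite, $\Sigma\in\mathbb{R}^{d\times d}$ symmetric positive semidefinite, and $\mu\in\mathbb{R}^{dN}$. Fix $t\in(0,T]$ and a vector $v_t\in\mathbb{R}^{dN}$. Let $\alpha_t=e^{-t/2}$, $\sigma_t=\sqrt{1-e^{-t}}$, and $$\nabla\log p_t(v_t)=-\big(\alpha_t^2(\Gamma\otimes\Sigma)+\sigma_t^2 I\big)^{-1}(v_t-\alpha_t\mu).$$ Given an error tolerance $\epsilon\in(0,1)$ and any integer $J<N$, define $\bar\Gamma\in\mathbb{R}^{N\times N}$ by $\bar\Gamma_{ij}=\Gamma_{ij}\,\mathbf{1}\{|i-j|<J\}$ and assume $\bar\Gamma$ is positive semidefinite. Consider the gradient descent iteration $$s^{(k+1)}=s^{(k)}-\eta_t\Big(\big(\alpha_t^2(\bar\Gamma\otimes\Sigma)+\sigma_t^2 I\big)s^{(k)}+(v_t-\alpha_t\mu)\Big),\qquad s^{(0)}=0 .$$ Then with a suitable step size $\eta_t$, after $K=O\big(\kappa_t\log(1/\epsilon)\big)$ iterations, $$\big\|s^{(K)}(v_t)-\nabla\log p_t(v_t)\big\|_2\le \frac{1}{\sigma_t^2}\|v_t-\alpha_t\mu\|_2\,\epsilon+\frac{\|\Sigma\|_{\rm F}\,\|v_t-\alpha_t\mu\|_2}{\sigma_t^4}\sqrt{\sum_{|i-j|\ge J}\Gamma_{ij}^2},$$ where $\kappa_t=\kappa\big(\alpha_t^2(\bar\Gamma\otimes\Sigma)+\sigma_t^2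 I\big)$.
   Context: $\otimes$ denotes the Kronecker product and $I$ the identity of size $dN$. For a positive definite matrix $A$, $\kappa(A)=\lambda_{\max}(A)/\lambda_{\min}(A)$ is its condition number. $\|\cdot\|_{\rm F}$ is the Frobenius norm. The vector $-\big(\alpha_t^2(\Gamma\otimes\Sigma)+\sigma_t^2 I\big)^{-1}(v-\alpha_t\mu)$ is the score (gradient of the log-density) of the Gaussian distribution $N(\alpha_t\mu,\alpha_t^2\Gamma\otimes\Sigma+\sigma_t^2 I)$, which is the law at diffusion time $t$ of the Ornstein–Uhlenbeck forward process $dX_t=-\tfrac12X_tdt+dW_t$ started from $N(\mu,\Gamma\otimes\Sigma)$. *)

theory Defs
  imports "HOL-Analysis.Analysis" "Jordan_Normal_Form.Char_Poly"
    "Jordan_Normal_Form.Gauss_Jordan_Elimination"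
begin

text \<open>Kronecker product A \<otimes> B of two matrices (row index i = i1 * rows B + i2).\<close>
definition kron_mat :: "real mat \<Rightarrow> real mat \<Rightarrow> real mat" where
  "kron_mat A B = mat (dim_row A * dim_row B) (dim_col A * dim_col B)
     (\<lambda>(i, j). A $$ (i div dim_row B, j div dim_col B) * B $$ (i mod dim_row B, j mod dim_col B))"

definition psd_mat :: "nat \<Rightarrow> real mat \<Rightarrow> bool" where
  "psd_mat n A \<longleftrightarrow> A \<in> carrier_mat n n \<and> transpose_mat A = A \<and>
     (\<forall>x \<in> carrier_vec n. x \<bullet> (A *\<^sub>v x) \<ge> 0)"

definition mat_inv :: "real mat \<Rightarrow> real mat" where
  "mat_inv A = the (mat_inverse A)"

definition cond_num :: "real mat \<Rightarrow> real" where
  "cond_num A = Max {l. eigenvalue A l} / Min {l. eigenvalue A l}"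

definition vnorm :: "real vec \<Rightarrow> real" where
  "vnorm x = sqrt (x \<bullet> x)"

definition frob_norm :: "real mat \<Rightarrow> real" where
  "frob_norm A = sqrt (\<Sum>i<dim_row A. \<Sum>j<dim_col A. (A $$ (i, j))\<^sup>2)"

definition band_mat :: "real mat \<Rightarrow> int \<Rightarrow> real mat" where
  "band_mat G J = mat (dim_row G) (dim_col G)
     (\<lambda>(i, j). if \<bar>int i - int j\<bar> < J then G $$ (i, j) else 0)"

primrec gd_iter :: "real mat \<Rightarrow> real vec \<Rightarrow> real \<Rightarrow> nat \<Rightarrow> real vec" where
  "gd_iter A r eta 0 = 0\<^sub>v (dim_vec r)"
| "gd_iter A r eta (Suc k) = gd_iter A r eta k - eta \<cdot>\<^sub>v (A *\<^sub>v gd_iter A r eta k + r)"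

end

theory Submission imports Defs begin

definition bil :: "nat \<Rightarrow> (nat \<Rightarrow> nat \<Rightarrow> real) \<Rightarrow> (nat \<Rightarrow> real) \<Rightarrow> (nat \<Rightarrow> real) \<Rightarrow> real" where
  "bil n b u v = (\<Sum>i<n. \<Sum>j<n. b i j * u i * v j)"

definition psdf :: "nat \<Rightarrow> (nat \<Rightarrow> nat \<Rightarrow> real) \<Rightarrow> bool" where
  "psdf n b = (\<forall>u. 0 \<le> bil n b u u)"

definition symf :: "nat \<Rightarrow> (nat \<Rightarrow> nat \<Rightarrow> real) \<Rightarrow> bool" where
  "symf n b = (\<forall>i<n. \<forall>j<n. b i j = b j i)"

lemma bil_add_left: "bil n b (\<lambda>i. u i + t * w i) v = bil n b u v + t * bil n b w v"
  by (simp add: bil_def algebra_simps sum.distrib sum_distrib_left)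

lemma bil_add_right: "bil n b u (\<lambda>i. v i + t * w i) = bil n b u v + t * bil n b u w"
  by (simp add: bil_def algebra_simps sum.distrib sum_distrib_left)

lemma bil_sym: assumes "symf n b" shows "bil n b u v = bil n b v u"
proof -
  have "bil n b u v = (\<Sum>j<n. \<Sum>i<n. b i j * u i * v j)" unfolding bil_def by (rule sum.swap)
  also have "\<dots> = bil n b v u" unfolding bil_def
    by (intro sum.cong refl, insert assms, auto simp: symf_def mult.commute mult.left_commute)
  finally show ?thesis .
qed

lemma quad_disc:
  fixes a B c :: real
  assumes "\<And>t. 0 \<le> a + 2 * t * B + t\<^sup>2 * c" "0 \<le> c"
  shows "B\<^sup>2 \<le> a * c"
proof (cases "c = 0")
  case True
  have "B = 0"
  proof (rule ccontr)
    assume "B \<noteq> 0"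
    have "0 \<le> a + 2 * (-(a+1)/(2*B)) * B" using assms(1)[of "-(a+1)/(2*B)"] True by simp
    also have "\<dots> = -1" using \<open>B \<noteq> 0\<close> by (simp add: field_simps)
    finally show False by simp
  qed
  then show ?thesis using True by simp
next
  case False
  then have c: "c > 0" using assms(2) by simp
  have "0 \<le> a + 2 * (-B/c) * B + (-B/c)\<^sup>2 * c" by (rule assms(1))
  also have "\<dots> = a - B\<^sup>2 / c" using c by (simp add: field_simps power2_eq_square)
  finally have "B\<^sup>2 / c \<le> a" by simp
  then show ?thesis using c by (simp add: field_simps)
qed

lemma bil_CS: assumes "psdf n b" "symf n b"
  shows "(bil n b u v)\<^sup>2 \<le> bil n b u u * bil n b v v"
proof (rule quad_disc)
  fix t
  have "0 \<le> bil n b (\<lambda>i. u i + t * v i) (\<lambda>i. u i + t * v i)" using assms(1) by (simp add: psdf_def)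
  also have "\<dots> = bil n b u u + 2 * t * bil n b u v + t\<^sup>2 * bil n b v v"
    unfolding bil_add_left bil_add_right bil_sym[OF assms(2), of v u]
    by (simp add: algebra_simps power2_eq_square)
  finally show "0 \<le> bil n b u u + 2 * t * bil n b u v + t\<^sup>2 * bil n b v v" .
qed (use assms in \<open>simp add: psdf_def\<close>)

lemma bil_ind_left: assumes "p < n"
  shows "bil n b (\<lambda>i. if i = p then 1 else 0) v = (\<Sum>j<n. b p j * v j)"
proof -
  have "bil n b (\<lambda>i. if i = p then 1 else 0) v = (\<Sum>i<n. if i = p then (\<Sum>j<n. b i j * v j) else 0)"
    unfolding bil_def by (intro sum.cong refl) auto
  also have "\<dots> = (\<Sum>j<n. b p j * v j)" using assms by (simp add: sum.delta)
  finally show ?thesis .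
qed

lemma bil_ind_right: assumes "p < n"
  shows "bil n b u (\<lambda>i. if i = p then 1 else 0) = (\<Sum>i<n. b i p * u i)"
proof -
  have "bil n b u (\<lambda>i. if i = p then 1 else 0) = (\<Sum>i<n. (\<Sum>j<n. if j = p then b i j * u i else 0))"
    unfolding bil_def by (intro sum.cong refl) auto
  also have "\<dots> = (\<Sum>i<n. b i p * u i)" using assms by (simp add: sum.delta)
  finally show ?thesis .
qed

definition QF :: "nat \<Rightarrow> nat \<Rightarrow> (nat \<Rightarrow> nat \<Rightarrow> real) \<Rightarrow> (nat \<Rightarrow> nat \<Rightarrow> real) \<Rightarrow> (nat \<Rightarrow> nat \<Rightarrow> real) \<Rightarrow> real" where
  "QF N d g s X = (\<Sum>a<N. \<Sum>b<N. g a b * (\<Sum>c<d. \<Sum>e<d. s c e * X a c * X b e))"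

lemma QF_add: "QF N d g (\<lambda>c e. s1 c e + k * s2 c e) X = QF N d g s1 X + k * QF N d g s2 X"
  by (simp add: QF_def algebra_simps sum.distrib sum_distrib_left)

lemma QF_rank1: assumes "psdf N g" shows "0 \<le> QF N d g (\<lambda>c e. w c * w e) X"
proof -
  have "QF N d g (\<lambda>c e. w c * w e) X = bil N g (\<lambda>a. \<Sum>c<d. w c * X a c) (\<lambda>a. \<Sum>c<d. w c * X a c)"
    unfolding QF_def bil_def
    by (intro sum.cong refl) (simp add: sum_product algebra_simps sum_distrib_left)
  then show ?thesis using assms by (simp add: psdf_def)
qed

lemma QF_zero: assumes "\<forall>c<d. \<forall>e<d. s c e = 0" shows "QF N d g s X = 0"
  unfolding QF_def using assms by simp


lemma psdf_diag: assumes "psdf n s" "p < n" shows "0 \<le> s p p"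
proof -
  have "0 \<le> bil n s (\<lambda>i. if i = p then 1 else 0) (\<lambda>i. if i = p then 1 else 0)"
    using assms by (simp add: psdf_def)
  also have "\<dots> = s p p" using assms(2) by (simp add: bil_ind_left sum.delta if_distrib cong: if_cong)
  finally show ?thesis .
qed

lemma psdf_zero_row: assumes "psdf n s" "symf n s" "p < n" "s p p = 0" "e < n"
  shows "s p e = 0"
proof -
  let ?u = "\<lambda>i. if i = p then 1 else (0::real)"
  let ?v = "\<lambda>j. s p j"
  have "(bil n s ?u ?v)\<^sup>2 \<le> bil n s ?u ?u * bil n s ?v ?v" by (rule bil_CS[OF assms(1,2)])
  also have "bil n s ?u ?u = s p p" using assms(3) by (simp add: bil_ind_left sum.delta if_distrib cong: if_cong)
  finally have "(\<Sum>j<n. s p j * s p j)\<^sup>2 \<le> 0" using assms(3,4) by (simp add: bil_ind_left)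
  then have "(\<Sum>j<n. s p j * s p j) = 0" by simp
  then have "\<forall>j\<in>{..<n}. s p j * s p j = 0" by (subst (asm) sum_nonneg_eq_0_iff) auto
  then show ?thesis using assms(5) by auto
qed

lemma kron_psd_aux:
  assumes g: "psdf N g"
  shows "\<forall>s. symf d s \<and> psdf d s \<and> (\<forall>c<d. \<forall>e<d. (c < d - m \<or> e < d - m) \<longrightarrow> s c e = 0)
     \<longrightarrow> 0 \<le> QF N d g s X"
proof (induction m)
  case 0
  then show ?case by (auto simp: QF_zero)
next
  case (Suc m)
  show ?case
  proof (intro allI impI, elim conjE)
    fix s assume sy: "symf d s" and ps: "psdf d s"
      and sup: "\<forall>c<d. \<forall>e<d. (c < d - Suc m \<or> e < d - Suc m) \<longrightarrow> s c e = 0"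
    show "0 \<le> QF N d g s X"
    proof (cases "d \<le> m")
      case True
      then show ?thesis using Suc.IH sy ps sup by auto
    next
      case False
      define p where "p = d - Suc m"
      have p: "p < d" "d - m = Suc p" using False unfolding p_def by auto
      show ?thesis
      proof (cases "s p p = 0")
        case True
        have "\<forall>c<d. \<forall>e<d. (c < d - m \<or> e < d - m) \<longrightarrow> s c e = 0"
        proof (intro allI impI)
          fix c e assume ce: "c < d" "e < d" "c < d - m \<or> e < d - m"
          show "s c e = 0"
          proof (cases "c = p \<or> e = p")
            case True
            then show ?thesis using psdf_zero_row[OF ps sy p(1) \<open>s p p = 0\<close>] sy ce
              unfolding symf_def by metis
          next
            case False
            then show ?thesis using sup ce p unfolding p_def by auto
          qed
        qed
        then show ?thesis using Suc.IH sy ps by auto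
      next
        case False
        have spp: "s p p > 0" using psdf_diag[OF ps p(1)] False by simp
        define w where "w c = s c p" for c
        define s' where "s' c e = s c e - w c * w e / s p p" for c e
        have seq: "s = (\<lambda>c e. s' c e + (1 / s p p) * (w c * w e))"
          unfolding s'_def by auto
        have sy': "symf d s'" using sy unfolding symf_def s'_def by (auto simp: mult.commute)
        have sup': "\<forall>c<d. \<forall>e<d. (c < d - m \<or> e < d - m) \<longrightarrow> s' c e = 0"
        proof (intro allI impI)
          fix c e assume ce: "c < d" "e < d" "c < d - m \<or> e < d - m"
          consider "c < p" | "e < p" | "c = p" | "e = p" using ce p by linarith
          then show "s' c e = 0"
          proof cases
            case 1 then show ?thesis using sup ce unfolding s'_def w_def p_def by auto
          next
            case 2 then show ?thesis using sup ce p unfolding s'_def w_def p_def by auto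
          next
            case 3 then show ?thesis using spp sy ce p unfolding s'_def w_def symf_def by auto
          next
            case 4 then show ?thesis using spp sy ce p unfolding s'_def w_def symf_def by auto
          qed
        qed
        have ps': "psdf d s'"
          unfolding psdf_def
        proof
          fix y
          let ?e = "\<lambda>i. if i = p then 1 else (0::real)"
          define \<beta> where "\<beta> = (\<Sum>j<d. s p j * y j)"
          define t where "t = - \<beta> / s p p"
          have b2: "bil d s y ?e = \<beta>" unfolding bil_ind_right[OF p(1)] \<beta>_def
            using sy p(1) unfolding symf_def by (intro sum.cong refl) (auto simp: mult.commute)
          have "0 \<le> bil d s (\<lambda>i. y i + t * ?e i) (\<lambda>i. y i + t * ?e i)" using ps by (simp add: psdf_def)
          also have "\<dots> = bil d s y y + 2 * t * \<beta> + t * t * s p p"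
            unfolding bil_add_left bil_add_right bil_ind_left[OF p(1)] b2
            using p(1) by (simp add: sum.delta if_distrib algebra_simps \<beta>_def cong: if_cong)
          also have "\<dots> = bil d s y y - \<beta> * \<beta> / s p p" unfolding t_def using spp
            by (simp add: field_simps)
          also have "\<dots> = bil d s' y y"
          proof -
            have "(\<Sum>c<d. w c * y c) = \<beta>" unfolding \<beta>_def w_def
              using sy p(1) unfolding symf_def by (intro sum.cong refl) (auto simp: mult.commute)
            have "(\<Sum>c<d. w c * y c) * (\<Sum>e<d. w e * y e) / s p p = (\<Sum>c<d. \<Sum>e<d. w c * w e / s p p * y c * y e)"
              by (simp add: sum_divide_distrib sum_product algebra_simps)
            then have "bil d s' y y = bil d s y y - (\<Sum>c<d. w c * y c) * (\<Sum>e<d. w e * y e) / s p p"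
              unfolding bil_def s'_def
              by (simp add: sum_subtractf left_diff_distrib)
            then show ?thesis using \<open>(\<Sum>c<d. w c * y c) = \<beta>\<close> by simp
          qed
          finally show "0 \<le> bil d s' y y" .
        qed
        have "QF N d g s X = QF N d g s' X + (1 / s p p) * QF N d g (\<lambda>c e. w c * w e) X"
          by (subst seq) (rule QF_add)
        moreover have "0 \<le> QF N d g s' X" using Suc.IH sy' ps' sup' by auto
        moreover have "0 \<le> QF N d g (\<lambda>c e. w c * w e) X" by (rule QF_rank1[OF g])
        ultimately show ?thesis using spp by simp
      qed
    qed
  qed
qed

lemma kron_psd_fun: assumes "psdf N g" "psdf d s" "symf d s" shows "0 \<le> QF N d g s X"
  using kron_psd_aux[OF assms(1), of d d X] assms by auto


lemma scal_sum: fixes x y :: "'a::comm_ring vec" shows "x \<bullet> y = (\<Sum>i<dim_vec y. x $ i * y $ i)"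
  unfolding scalar_prod_def by (simp add: atLeast0LessThan)

lemma mv_index: fixes x :: "'a::comm_ring vec" shows "i < dim_row A \<Longrightarrow> dim_vec x = dim_col A \<Longrightarrow> (A *\<^sub>v x) $ i = (\<Sum>j<dim_vec x. A $$ (i, j) * x $ j)"
  by (simp add: scal_sum)

lemma quad_bil: fixes x y :: "real vec" assumes "A \<in> carrier_mat n n" "x \<in> carrier_vec n" "y \<in> carrier_vec n"
  shows "y \<bullet> (A *\<^sub>v x) = bil n (\<lambda>i j. A $$ (i, j)) (\<lambda>i. y $ i) (\<lambda>j. x $ j)"
  using assms unfolding bil_def
  by (simp add: scal_sum sum_distrib_left algebra_simps)

lemma vec_CS: fixes x y :: "real vec" assumes "x \<in> carrier_vec n" "y \<in> carrier_vec n"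
  shows "(x \<bullet> y)\<^sup>2 \<le> (x \<bullet> x) * (y \<bullet> y)"
  using assms Cauchy_Schwarz_ineq_sum[of "\<lambda>i. x $ i" "\<lambda>i. y $ i" "{..<n}"]
  by (simp add: scal_sum power2_eq_square)

lemma self_scal_nonneg: "0 \<le> (x::real vec) \<bullet> x"
  by (simp add: scal_sum sum_nonneg)

lemma frob_sq: "(frob_norm A)\<^sup>2 = (\<Sum>i<dim_row A. \<Sum>j<dim_col A. (A $$ (i, j))\<^sup>2)"
  unfolding frob_norm_def by (simp add: sum_nonneg)

lemma mv_bound: fixes A :: "real mat" assumes "A \<in> carrier_mat nr nc" "x \<in> carrier_vec nc"
  shows "(A *\<^sub>v x) \<bullet> (A *\<^sub>v x) \<le> (frob_norm A)\<^sup>2 * (x \<bullet> x)"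
proof -
  have "(A *\<^sub>v x) \<bullet> (A *\<^sub>v x) = (\<Sum>i<nr. (\<Sum>j<nc. A $$ (i, j) * x $ j)\<^sup>2)"
    using assms by (simp add: scal_sum mv_index power2_eq_square)
  also have "\<dots> \<le> (\<Sum>i<nr. (\<Sum>j<nc. (A $$ (i, j))\<^sup>2) * (\<Sum>j<nc. (x $ j)\<^sup>2))"
    by (intro sum_mono Cauchy_Schwarz_ineq_sum)
  also have "\<dots> = (\<Sum>i<nr. \<Sum>j<nc. (A $$ (i, j))\<^sup>2) * (x \<bullet> x)"
    using assms by (simp add: scal_sum sum_distrib_right power2_eq_square)
  also have "\<dots> = (frob_norm A)\<^sup>2 * (x \<bullet> x)"
    using assms by (simp add: frob_sq)
  finally show ?thesis .
qed

definition symm :: "nat \<Rightarrow> real mat \<Rightarrow> bool" where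
  "symm n A = (\<forall>i<n. \<forall>j<n. A $$ (i, j) = A $$ (j, i))"

lemma bil_vec: "bil n b (\<lambda>i. vec n u $ i) (\<lambda>i. vec n v $ i) = bil n b u v"
  unfolding bil_def by (intro sum.cong refl) auto

lemma psdf_of_mat: assumes "A \<in> carrier_mat n n" "\<forall>x\<in>carrier_vec n. 0 \<le> x \<bullet> (A *\<^sub>v x)"
  shows "psdf n (\<lambda>i j. A $$ (i, j))"
  unfolding psdf_def
proof
  fix u
  have "0 \<le> vec n u \<bullet> (A *\<^sub>v vec n u)" using assms by auto
  then show "0 \<le> bil n (\<lambda>i j. A $$ (i, j)) u u" using assms(1)
    by (simp add: quad_bil[OF assms(1)] bil_vec del: index_vec)
qed

lemma mat_CS: fixes x y :: "real vec" assumes "A \<in> carrier_mat n n" "symm n A" "\<forall>x\<in>carrier_vec n. 0 \<le> x \<bullet> (A *\<^sub>v x)"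
  "x \<in> carrier_vec n" "y \<in> carrier_vec n"
  shows "(y \<bullet> (A *\<^sub>v x))\<^sup>2 \<le> (x \<bullet> (A *\<^sub>v x)) * (y \<bullet> (A *\<^sub>v y))"
  using bil_CS[OF psdf_of_mat[OF assms(1,3)], of "\<lambda>i. y $ i" "\<lambda>i. x $ i"] assms
  by (simp add: quad_bil symf_def symm_def mult.commute)


lemma scal_self_pos: fixes x :: "real vec" assumes "x \<in> carrier_vec n" "x \<noteq> 0\<^sub>v n"
  shows "0 < x \<bullet> x"
proof (rule ccontr)
  assume "\<not> 0 < x \<bullet> x"
  then have "(\<Sum>i<n. x $ i * x $ i) = 0" using assms self_scal_nonneg[of x]
    by (simp add: scal_sum)
  then have "\<forall>i\<in>{..<n}. x $ i * x $ i = 0" by (subst (asm) sum_nonneg_eq_0_iff) auto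
  then have "x = 0\<^sub>v n" using assms(1) by (intro eq_vecI) auto
  then show False using assms(2) by simp
qed

lemma rayleigh_bound: fixes A :: "real mat" assumes "A \<in> carrier_mat n n" "x \<in> carrier_vec n"
  shows "\<bar>x \<bullet> (A *\<^sub>v x)\<bar> \<le> frob_norm A * (x \<bullet> x)"
proof -
  have "(x \<bullet> (A *\<^sub>v x))\<^sup>2 \<le> (x \<bullet> x) * ((A *\<^sub>v x) \<bullet> (A *\<^sub>v x))"
    using vec_CS[of x n "A *\<^sub>v x"] assms by auto
  also have "\<dots> \<le> (x \<bullet> x) * ((frob_norm A)\<^sup>2 * (x \<bullet> x))"
    by (intro mult_left_mono mv_bound[OF assms] self_scal_nonneg)
  also have "\<dots> = (frob_norm A * (x \<bullet> x))\<^sup>2" by (simp add: power2_eq_square)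
  finally have "(x \<bullet> (A *\<^sub>v x))\<^sup>2 \<le> (frob_norm A * (x \<bullet> x))\<^sup>2" .
  then have "\<bar>x \<bullet> (A *\<^sub>v x)\<bar> \<le> \<bar>frob_norm A * (x \<bullet> x)\<bar>" by (simp add: abs_le_square_iff)
  also have "\<dots> = frob_norm A * (x \<bullet> x)"
    using self_scal_nonneg[of x] by (simp add: frob_norm_def abs_mult sum_nonneg)
  finally show ?thesis .
qed

lemma lin_mv: fixes A :: "real mat" assumes "A \<in> carrier_mat n n" "x \<in> carrier_vec n"
  shows "(k \<cdot>\<^sub>m A + c \<cdot>\<^sub>m 1\<^sub>m n) *\<^sub>v x = k \<cdot>\<^sub>v (A *\<^sub>v x) + c \<cdot>\<^sub>v x"
proof (rule eq_vecI)
  show "dim_vec ((k \<cdot>\<^sub>m A + c \<cdot>\<^sub>m 1\<^sub>m n) *\<^sub>v x) = dim_vec (k \<cdot>\<^sub>v (A *\<^sub>v x) + c \<cdot>\<^sub>v x)"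
    using assms by simp
  fix i assume "i < dim_vec (k \<cdot>\<^sub>v (A *\<^sub>v x) + c \<cdot>\<^sub>v x)"
  then have i: "i < n" using assms by simp
  have "((k \<cdot>\<^sub>m A + c \<cdot>\<^sub>m 1\<^sub>m n) *\<^sub>v x) $ i = (\<Sum>j<n. (k * A $$ (i, j) + (if i = j then c else 0)) * x $ j)"
    by (subst mv_index) (use assms i in \<open>auto intro!: sum.cong\<close>)
  also have "\<dots> = (\<Sum>j<n. k * A $$ (i, j) * x $ j + (if i = j then c * x $ j else 0))"
    by (intro sum.cong) (auto simp: algebra_simps)
  also have "\<dots> = k * (\<Sum>j<n. A $$ (i, j) * x $ j) + c * x $ i"
    using i by (simp add: sum.distrib sum_distrib_left sum.delta algebra_simps)
  also have "\<dots> = (k \<cdot>\<^sub>v (A *\<^sub>v x) + c \<cdot>\<^sub>v x) $ i" using assms i by (auto simp: scal_sum intro!: sum.cong)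
  finally show "((k \<cdot>\<^sub>m A + c \<cdot>\<^sub>m 1\<^sub>m n) *\<^sub>v x) $ i = (k \<cdot>\<^sub>v (A *\<^sub>v x) + c \<cdot>\<^sub>v x) $ i" .
qed

lemma lin_quad: fixes A :: "real mat" assumes "A \<in> carrier_mat n n" "x \<in> carrier_vec n"
  shows "x \<bullet> ((k \<cdot>\<^sub>m A + c \<cdot>\<^sub>m 1\<^sub>m n) *\<^sub>v x) = k * (x \<bullet> (A *\<^sub>v x)) + c * (x \<bullet> x)"
  unfolding lin_mv[OF assms] using assms
  by (subst scalar_prod_add_distrib[of _ n]) auto

lemma lin_symm: assumes "A \<in> carrier_mat n n" "symm n A" shows "symm n (k \<cdot>\<^sub>m A + c \<cdot>\<^sub>m 1\<^sub>m n)"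
  using assms unfolding symm_def by auto

lemma top_eig: fixes A :: "real mat" assumes A: "A \<in> carrier_mat n n" and n: "n > 0" and sy: "symm n A"
  shows "\<exists>l. eigenvalue A l \<and> (\<forall>x\<in>carrier_vec n. x \<bullet> (A *\<^sub>v x) \<le> l * (x \<bullet> x))"
proof -
  define R where "R = {x \<bullet> (A *\<^sub>v x) / (x \<bullet> x) | x. x \<in> carrier_vec n \<and> x \<noteq> 0\<^sub>v n}"
  have u0: "(unit_vec n 0 :: real vec) \<noteq> 0\<^sub>v n"
  proof
    assume "unit_vec n 0 = (0\<^sub>v n :: real vec)"
    then have "unit_vec n 0 $ 0 = (0\<^sub>v n :: real vec) $ 0" by simp
    then show False using n by simp
  qed
  have Rne: "R \<noteq> {}" unfolding R_def using n u0
    by (auto intro!: exI[of _ "unit_vec n 0"])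
  have Rbd: "bdd_above R" unfolding bdd_above_def R_def
  proof (intro exI[of _ "frob_norm A"] ballI, clarify)
    fix x :: "real vec" assume x: "x \<in> carrier_vec n" "x \<noteq> 0\<^sub>v n"
    have "x \<bullet> (A *\<^sub>v x) \<le> frob_norm A * (x \<bullet> x)" using rayleigh_bound[OF A x(1)] by simp
    then show "x \<bullet> (A *\<^sub>v x) / (x \<bullet> x) \<le> frob_norm A"
      using scal_self_pos[OF x] by (simp add: divide_le_eq)
  qed
  define lam where "lam = Sup R"
  have le: "x \<bullet> (A *\<^sub>v x) \<le> lam * (x \<bullet> x)" if x: "x \<in> carrier_vec n" for x
  proof (cases "x = 0\<^sub>v n")
    case True then show ?thesis using A by simp
  next
    case False
    have "x \<bullet> (A *\<^sub>v x) / (x \<bullet> x) \<le> lam" unfolding lam_def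
      by (rule cSup_upper[OF _ Rbd]) (use x False R_def in auto)
    then show ?thesis using scal_self_pos[OF x False] by (simp add: divide_le_eq)
  qed
  define B where "B = (-1) \<cdot>\<^sub>m A + lam \<cdot>\<^sub>m 1\<^sub>m n"
  have B: "B \<in> carrier_mat n n" unfolding B_def using A by simp
  have Bq: "x \<bullet> (B *\<^sub>v x) = lam * (x \<bullet> x) - x \<bullet> (A *\<^sub>v x)" if "x \<in> carrier_vec n" for x
    unfolding B_def using lin_quad[OF A that] by simp
  have Bpsd: "\<forall>x\<in>carrier_vec n. 0 \<le> x \<bullet> (B *\<^sub>v x)" using Bq le by simp
  have Bsy: "symm n B" unfolding B_def by (rule lin_symm[OF A sy])
  show ?thesis
  proof (cases "det B = 0")
    case True
    then obtain v where v: "v \<in> carrier_vec n" "v \<noteq> 0\<^sub>v n" "B *\<^sub>v v = 0\<^sub>v n"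
      using det_0_iff_vec_prod_zero[OF B] by auto
    have "(-1) \<cdot>\<^sub>v (A *\<^sub>v v) + lam \<cdot>\<^sub>v v = 0\<^sub>v n" using v lin_mv[OF A v(1)] unfolding B_def by simp
    then have "A *\<^sub>v v = lam \<cdot>\<^sub>v v"
    proof -
      assume eq: "(-1) \<cdot>\<^sub>v (A *\<^sub>v v) + lam \<cdot>\<^sub>v v = 0\<^sub>v n"
      show ?thesis
      proof (rule eq_vecI)
        fix i assume "i < dim_vec (lam \<cdot>\<^sub>v v)"
        then have i: "i < n" using v by simp
        have "((-1) \<cdot>\<^sub>v (A *\<^sub>v v) + lam \<cdot>\<^sub>v v) $ i = 0" using eq i by simp
        then show "(A *\<^sub>v v) $ i = (lam \<cdot>\<^sub>v v) $ i" using i A v by simp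
      qed (use A v in simp)
    qed
    then have "eigenvalue A lam" unfolding eigenvalue_def eigenvector_def
      using v A by auto
    then show ?thesis using le by auto
  next
    case False
    have "B \<in> Units (ring_mat TYPE(real) n ())" by (rule det_non_zero_imp_unit[OF B False])
    moreover have "B \<notin> Units (ring_mat TYPE(real) n ())" if "mat_inverse B = None"
      using mat_inverse(1)[OF B that, where b = "()"] by simp
    ultimately obtain C where C: "mat_inverse B = Some C" by (cases "mat_inverse B") auto
    from mat_inverse(2)[OF B C] have CB: "C * B = 1\<^sub>m n" and Cc: "C \<in> carrier_mat n n" by auto
    define c where "c = (frob_norm C)\<^sup>2 * frob_norm B + 1"
    have fB: "0 \<le> frob_norm B" by (simp add: frob_norm_def sum_nonneg)
    have c: "c > 0" unfolding c_def using fB by (simp add: add_nonneg_pos)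
    have key: "x \<bullet> x \<le> c * (x \<bullet> (B *\<^sub>v x))" if x: "x \<in> carrier_vec n" for x
    proof -
      let ?y = "B *\<^sub>v x"
      have y: "?y \<in> carrier_vec n" using B x by simp
      have q0: "0 \<le> x \<bullet> (B *\<^sub>v x)" using Bpsd x by auto
      have "x = C *\<^sub>v ?y" using CB Cc B x by (metis assoc_mult_mat_vec one_mult_mat_vec)
      then have "x \<bullet> x \<le> (frob_norm C)\<^sup>2 * (?y \<bullet> ?y)" using mv_bound[OF Cc y] by simp
      moreover have "?y \<bullet> ?y \<le> frob_norm B * (x \<bullet> (B *\<^sub>v x))"
      proof (cases "?y \<bullet> ?y = 0")
        case True then show ?thesis using q0 fB by simp
      next
        case False
        then have yp: "?y \<bullet> ?y > 0" using self_scal_nonneg[of ?y] by simp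
        have "(?y \<bullet> ?y)\<^sup>2 \<le> (x \<bullet> (B *\<^sub>v x)) * (?y \<bullet> (B *\<^sub>v ?y))"
          by (rule mat_CS[OF B Bsy Bpsd x y])
        also have "\<dots> \<le> (x \<bullet> (B *\<^sub>v x)) * (frob_norm B * (?y \<bullet> ?y))"
          using rayleigh_bound[OF B y] q0 by (intro mult_left_mono) auto
        finally have "(?y \<bullet> ?y) * (?y \<bullet> ?y) \<le> (frob_norm B * (x \<bullet> (B *\<^sub>v x))) * (?y \<bullet> ?y)"
          by (simp add: power2_eq_square algebra_simps)
        then show ?thesis using yp by simp
      qed
      ultimately have "x \<bullet> x \<le> (frob_norm C)\<^sup>2 * frob_norm B * (x \<bullet> (B *\<^sub>v x))"
        by (smt (verit, ccfv_SIG) mult.assoc mult_left_mono zero_le_power2)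
      also have "\<dots> \<le> c * (x \<bullet> (B *\<^sub>v x))" unfolding c_def using q0 by (simp add: algebra_simps)
      finally show ?thesis .
    qed
    have "Sup R \<le> lam - 1 / c"
    proof (rule cSup_least[OF Rne])
      fix r assume "r \<in> R"
      then obtain x where x: "x \<in> carrier_vec n" "x \<noteq> 0\<^sub>v n" and r: "r = x \<bullet> (A *\<^sub>v x) / (x \<bullet> x)"
        unfolding R_def by auto
      have xp: "x \<bullet> x > 0" by (rule scal_self_pos[OF x])
      have "x \<bullet> (A *\<^sub>v x) = lam * (x \<bullet> x) - x \<bullet> (B *\<^sub>v x)" using Bq[OF x(1)] by simp
      moreover have "x \<bullet> x / c \<le> x \<bullet> (B *\<^sub>v x)" using key[OF x(1)] c by (simp add: divide_le_eq mult.commute)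
      ultimately have "x \<bullet> (A *\<^sub>v x) \<le> (lam - 1 / c) * (x \<bullet> x)" by (simp add: algebra_simps)
      then show "r \<le> lam - 1 / c" unfolding r using xp by (simp add: divide_le_eq)
    qed
    then show ?thesis using c unfolding lam_def by simp
  qed
qed


lemma eig_finite: fixes A :: "real mat" assumes "A \<in> carrier_mat n n"
  shows "finite {l. eigenvalue A l}"
proof -
  have "char_poly A \<noteq> 0" using degree_monic_char_poly[OF assms] by auto
  then have "finite {x. poly (char_poly A) x = 0}" by (rule poly_roots_finite)
  then show ?thesis by (simp add: eigenvalue_root_char_poly[OF assms])
qed

lemma eig_bounds: fixes A :: "real mat"
  assumes A: "A \<in> carrier_mat n n" and n: "n > 0" and sy: "symm n A" and c: "c > 0"
    and lb: "\<forall>x\<in>carrier_vec n. c * (x \<bullet> x) \<le> x \<bullet> (A *\<^sub>v x)"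
  shows "c \<le> Min {l. eigenvalue A l}" "Min {l. eigenvalue A l} \<le> Max {l. eigenvalue A l}"
    "\<forall>x\<in>carrier_vec n. Min {l. eigenvalue A l} * (x \<bullet> x) \<le> x \<bullet> (A *\<^sub>v x)"
    "\<forall>x\<in>carrier_vec n. x \<bullet> (A *\<^sub>v x) \<le> Max {l. eigenvalue A l} * (x \<bullet> x)"
proof -
  define E where "E = {l. eigenvalue A l}"
  have fin: "finite E" unfolding E_def by (rule eig_finite[OF A])
  obtain l1 where l1: "eigenvalue A l1" "\<forall>x\<in>carrier_vec n. x \<bullet> (A *\<^sub>v x) \<le> l1 * (x \<bullet> x)"
    using top_eig[OF A n sy] by auto
  define A' where "A' = (-1) \<cdot>\<^sub>m A + 0 \<cdot>\<^sub>m 1\<^sub>m n"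
  have A': "A' \<in> carrier_mat n n" unfolding A'_def using A by simp
  obtain l2 where l2: "eigenvalue A' l2" "\<forall>x\<in>carrier_vec n. x \<bullet> (A' *\<^sub>v x) \<le> l2 * (x \<bullet> x)"
    using top_eig[OF A' n] lin_symm[OF A sy] unfolding A'_def by auto
  have l2A: "eigenvalue A (-l2)"
  proof -
    obtain v where v: "eigenvector A' v l2" using l2(1) unfolding eigenvalue_def by auto
    then have v1: "v \<in> carrier_vec n" "v \<noteq> 0\<^sub>v n" "A' *\<^sub>v v = l2 \<cdot>\<^sub>v v"
      using A' unfolding eigenvector_def by auto
    have eq: "(-1) \<cdot>\<^sub>v (A *\<^sub>v v) + 0 \<cdot>\<^sub>v v = l2 \<cdot>\<^sub>v v" using v1 lin_mv[OF A v1(1)] unfolding A'_def by simp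
    have "A *\<^sub>v v = (-l2) \<cdot>\<^sub>v v"
    proof (rule eq_vecI)
      fix i assume "i < dim_vec ((-l2) \<cdot>\<^sub>v v)"
      then have i: "i < n" using v1 by simp
      have "((-1) \<cdot>\<^sub>v (A *\<^sub>v v) + 0 \<cdot>\<^sub>v v) $ i = (l2 \<cdot>\<^sub>v v) $ i" using eq by simp
      then show "(A *\<^sub>v v) $ i = ((-l2) \<cdot>\<^sub>v v) $ i" using i A v1 by simp
    qed (use A v1 in simp)
    then show ?thesis unfolding eigenvalue_def eigenvector_def using v1 A by auto
  qed
  have E1: "l1 \<in> E" "-l2 \<in> E" using l1(1) l2A unfolding E_def by auto
  have ne: "E \<noteq> {}" using E1 by auto
  have M: "l1 \<le> Max E" using fin E1 by simp
  have m: "Min E \<le> -l2" using fin E1 by simp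
  have "Min E \<in> E" using fin ne by simp
  then obtain v where v: "v \<in> carrier_vec n" "v \<noteq> 0\<^sub>v n" "A *\<^sub>v v = Min E \<cdot>\<^sub>v v"
    unfolding E_def eigenvalue_def eigenvector_def using A by auto
  have "c * (v \<bullet> v) \<le> v \<bullet> (A *\<^sub>v v)" using lb v by auto
  also have "\<dots> = Min E * (v \<bullet> v)" using v by simp
  finally show "c \<le> Min {l. eigenvalue A l}" using scal_self_pos[OF v(1,2)] unfolding E_def by simp
  show "Min {l. eigenvalue A l} \<le> Max {l. eigenvalue A l}" using fin \<open>Min E \<in> E\<close> unfolding E_def by simp
  show "\<forall>x\<in>carrier_vec n. x \<bullet> (A *\<^sub>v x) \<le> Max {l. eigenvalue A l} * (x \<bullet> x)"
  proof
    fix x :: "real vec" assume x: "x \<in> carrier_vec n"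
    have "x \<bullet> (A *\<^sub>v x) \<le> l1 * (x \<bullet> x)" using l1 x by auto
    also have "\<dots> \<le> Max E * (x \<bullet> x)" using M self_scal_nonneg[of x] by (simp add: mult_right_mono)
    finally show "x \<bullet> (A *\<^sub>v x) \<le> Max {l. eigenvalue A l} * (x \<bullet> x)" unfolding E_def .
  qed
  show "\<forall>x\<in>carrier_vec n. Min {l. eigenvalue A l} * (x \<bullet> x) \<le> x \<bullet> (A *\<^sub>v x)"
  proof
    fix x :: "real vec" assume x: "x \<in> carrier_vec n"
    have "x \<bullet> (A' *\<^sub>v x) = - (x \<bullet> (A *\<^sub>v x))" unfolding A'_def using lin_quad[OF A x] by simp
    then have "- l2 * (x \<bullet> x) \<le> x \<bullet> (A *\<^sub>v x)" using l2(2) x by auto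
    moreover have "Min E * (x \<bullet> x) \<le> - l2 * (x \<bullet> x)" using mult_right_mono[OF m self_scal_nonneg[of x]] by simp
    ultimately show "Min {l. eigenvalue A l} * (x \<bullet> x) \<le> x \<bullet> (A *\<^sub>v x)" unfolding E_def by simp
  qed
qed


lemma gd_carrier: assumes "A \<in> carrier_mat n n" "r \<in> carrier_vec n"
  shows "gd_iter A r eta k \<in> carrier_vec n"
  using assms by (induction k) auto

lemma sq_expand: fixes e w :: "real vec" assumes "e \<in> carrier_vec n" "w \<in> carrier_vec n"
  shows "(e - eta \<cdot>\<^sub>v w) \<bullet> (e - eta \<cdot>\<^sub>v w) = e \<bullet> e - 2 * eta * (e \<bullet> w) + eta\<^sup>2 * (w \<bullet> w)"
  using assms
  by (simp add: scal_sum power2_eq_square algebra_simps sum_subtractf sum.distrib sum_distrib_left)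

lemma AA_bound: fixes A :: "real mat" assumes A: "A \<in> carrier_mat n n" and sy: "symm n A"
  and ps: "\<forall>x\<in>carrier_vec n. 0 \<le> x \<bullet> (A *\<^sub>v x)"
  and hi: "\<forall>x\<in>carrier_vec n. x \<bullet> (A *\<^sub>v x) \<le> M * (x \<bullet> x)"
  and e: "e \<in> carrier_vec n"
  shows "(A *\<^sub>v e) \<bullet> (A *\<^sub>v e) \<le> M * (e \<bullet> (A *\<^sub>v e))"
proof -
  let ?y = "A *\<^sub>v e"
  have y: "?y \<in> carrier_vec n" using A e by simp
  have q0: "0 \<le> e \<bullet> ?y" using ps e by auto
  show ?thesis
  proof (cases "?y \<bullet> ?y = 0")
    case True
    have "0 \<le> M * (e \<bullet> ?y)"
    proof (cases "e \<bullet> ?y = 0")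
      case False
      then have "0 < e \<bullet> ?y" using q0 by simp
      moreover have "e \<bullet> ?y \<le> M * (e \<bullet> e)" using hi e by auto
      ultimately have "0 < M * (e \<bullet> e)" by linarith
      then have "0 < M" using self_scal_nonneg[of e] by (simp add: zero_less_mult_iff)
      then show ?thesis using q0 by simp
    qed simp
    then show ?thesis using True by simp
  next
    case False
    then have yp: "?y \<bullet> ?y > 0" using self_scal_nonneg[of ?y] by simp
    have "(?y \<bullet> ?y)\<^sup>2 \<le> (e \<bullet> ?y) * (?y \<bullet> (A *\<^sub>v ?y))"
      by (rule mat_CS[OF A sy ps e y])
    also have "\<dots> \<le> (e \<bullet> ?y) * (M * (?y \<bullet> ?y))"
      using hi y q0 by (intro mult_left_mono) auto
    finally have "(?y \<bullet> ?y) * (?y \<bullet> ?y) \<le> (M * (e \<bullet> ?y)) * (?y \<bullet> ?y)"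
      by (simp add: power2_eq_square algebra_simps)
    then show ?thesis using yp by simp
  qed
qed

lemma gd_conv: fixes A :: "real mat"
  assumes A: "A \<in> carrier_mat n n" and sy: "symm n A" and m: "0 < m" "m \<le> M"
  and lo: "\<forall>x\<in>carrier_vec n. m * (x \<bullet> x) \<le> x \<bullet> (A *\<^sub>v x)"
  and hi: "\<forall>x\<in>carrier_vec n. x \<bullet> (A *\<^sub>v x) \<le> M * (x \<bullet> x)"
  and r: "r \<in> carrier_vec n" and y: "y \<in> carrier_vec n" and Ay: "A *\<^sub>v y + r = 0\<^sub>v n"
  shows "(gd_iter A r (1/M) k - y) \<bullet> (gd_iter A r (1/M) k - y) \<le> (1 - m/M)^k * (y \<bullet> y)"
proof (induction k)
  case 0
  have "gd_iter A r (1/M) 0 - y = - y" using r y by auto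
  then show ?case using y by simp
next
  case (Suc k)
  define s where "s = gd_iter A r (1/M) k"
  define e where "e = s - y"
  define \<eta> where "\<eta> = 1 / M"
  have s: "s \<in> carrier_vec n" unfolding s_def by (rule gd_carrier[OF A r])
  have ec: "e \<in> carrier_vec n" unfolding e_def using s y by simp
  have Mp: "M > 0" using m by simp
  have ps: "\<forall>x\<in>carrier_vec n. 0 \<le> x \<bullet> (A *\<^sub>v x)"
    using lo m self_scal_nonneg by (meson mult_nonneg_nonneg order.strict_implies_order order_trans)
  have step: "gd_iter A r (1/M) (Suc k) - y = e - \<eta> \<cdot>\<^sub>v (A *\<^sub>v e)"
  proof (rule eq_vecI)
    fix i assume "i < dim_vec (e - \<eta> \<cdot>\<^sub>v (A *\<^sub>v e))"
    then have i: "i < n" using ec A by simp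
    have Ae: "(A *\<^sub>v e) $ i = (A *\<^sub>v s) $ i - (A *\<^sub>v y) $ i"
      using A s y i unfolding e_def by (simp add: mv_index sum_subtractf algebra_simps)
    have "(A *\<^sub>v y) $ i + r $ i = 0" using arg_cong[OF Ay, of "\<lambda>v. v $ i"] A y r i by simp
    then show "(gd_iter A r (1/M) (Suc k) - y) $ i = (e - \<eta> \<cdot>\<^sub>v (A *\<^sub>v e)) $ i"
      using Ae A s y r i unfolding e_def s_def \<eta>_def by (simp add: algebra_simps add_divide_distrib[symmetric])
  qed (use A s y r ec in \<open>simp add: s_def\<close>)
  have "(e - \<eta> \<cdot>\<^sub>v (A *\<^sub>v e)) \<bullet> (e - \<eta> \<cdot>\<^sub>v (A *\<^sub>v e))
      = e \<bullet> e - 2 * \<eta> * (e \<bullet> (A *\<^sub>v e)) + \<eta>\<^sup>2 * ((A *\<^sub>v e) \<bullet> (A *\<^sub>v e))"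
    using ec A by (intro sq_expand) auto
  also have "\<dots> \<le> e \<bullet> e - 2 * \<eta> * (e \<bullet> (A *\<^sub>v e)) + \<eta>\<^sup>2 * (M * (e \<bullet> (A *\<^sub>v e)))"
    using AA_bound[OF A sy ps hi ec] by (intro add_left_mono mult_left_mono) auto
  also have "\<dots> = e \<bullet> e - (e \<bullet> (A *\<^sub>v e)) / M" unfolding \<eta>_def using Mp
    by (simp add: field_simps power2_eq_square)
  also have "\<dots> \<le> e \<bullet> e - m * (e \<bullet> e) / M" using lo ec Mp by (simp add: divide_right_mono)
  also have "\<dots> = (1 - m / M) * (e \<bullet> e)" by (simp add: algebra_simps)
  also have "\<dots> \<le> (1 - m / M) * ((1 - m/M)^k * (y \<bullet> y))"
    using Suc.IH m Mp unfolding e_def s_def by (intro mult_left_mono) (auto simp: field_simps)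
  finally show ?case using step by simp
qed


lemma sum_split_prod: fixes N d :: nat shows "(\<Sum>i<N*d. f i) = (\<Sum>a<N. \<Sum>c<d. f (a*d+c))"
proof -
  have "(\<Sum>i<N*d. f i) = (\<Sum>a<N. \<Sum>i\<in>{a*d..<a*d+d}. f i)" by (rule sum.nat_group[symmetric])
  also have "\<dots> = (\<Sum>a<N. \<Sum>c<d. f (a*d+c))"
  proof (rule sum.cong[OF refl])
    fix a
    have "{a*d..<a*d+d} = (\<lambda>c. a*d+c) ` {..<d}"
      by (auto simp: image_iff) (metis add_diff_inverse_nat add_less_cancel_left not_less lessThan_iff)
    then show "(\<Sum>i\<in>{a*d..<a*d+d}. f i) = (\<Sum>c<d. f (a*d+c))"
      by (simp add: sum.reindex)
  qed
  finally show ?thesis .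
qed

lemma kron_carrier: assumes "G \<in> carrier_mat N N" "S \<in> carrier_mat d d"
  shows "kron_mat G S \<in> carrier_mat (d*N) (d*N)"
  using assms unfolding kron_mat_def by (simp add: mult.commute)

lemma kron_index: assumes "G \<in> carrier_mat N N" "S \<in> carrier_mat d d" "i < d*N" "j < d*N"
  shows "kron_mat G S $$ (i, j) = G $$ (i div d, j div d) * S $$ (i mod d, j mod d)"
  using assms unfolding kron_mat_def by (simp add: mult.commute)

lemma div_mod_lt: assumes "a < N" "c < (d::nat)" shows "a*d+c < d*N"
proof -
  have "a*d + c < a*d + d" using assms by simp
  also have "\<dots> = (a+1)*d" by simp
  also have "\<dots> \<le> N * d" using assms by (intro mult_right_mono) auto
  finally show ?thesis by (simp add: mult.commute)
qed

lemma double_split: fixes F :: "nat \<Rightarrow> nat \<Rightarrow> real"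
  shows "(\<Sum>i<d*N. \<Sum>j<d*N. F i j) = (\<Sum>a<N. \<Sum>b<N. \<Sum>c<d. \<Sum>e<d. F (a*d+c) (b*d+e))"
proof -
  have "(\<Sum>i<d*N. \<Sum>j<d*N. F i j) = (\<Sum>a<N. \<Sum>c<d. \<Sum>b<N. \<Sum>e<d. F (a*d+c) (b*d+e))"
    by (simp add: sum_split_prod mult.commute[of d N])
  also have "\<dots> = (\<Sum>a<N. \<Sum>b<N. \<Sum>c<d. \<Sum>e<d. F (a*d+c) (b*d+e))"
    by (rule sum.cong[OF refl], rule sum.swap)
  finally show ?thesis .
qed

lemma kron_quad: assumes G: "G \<in> carrier_mat N N" and S: "S \<in> carrier_mat d d" and x: "x \<in> carrier_vec (d*N)"
  shows "x \<bullet> (kron_mat G S *\<^sub>v x) = QF N d (\<lambda>a b. G $$ (a, b)) (\<lambda>c e. S $$ (c, e)) (\<lambda>a c. x $ (a*d+c))"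
proof -
  have "x \<bullet> (kron_mat G S *\<^sub>v x) = (\<Sum>i<d*N. \<Sum>j<d*N. kron_mat G S $$ (i, j) * x $ i * x $ j)"
    using quad_bil[OF kron_carrier[OF G S] x x] unfolding bil_def by simp
  also have "\<dots> = (\<Sum>a<N. \<Sum>b<N. \<Sum>c<d. \<Sum>e<d. G $$ (a, b) * S $$ (c, e) * x $ (a*d+c) * x $ (b*d+e))"
    unfolding double_split
    by (intro sum.cong refl) (simp add: kron_index[OF G S] div_mod_lt)
  also have "\<dots> = QF N d (\<lambda>a b. G $$ (a, b)) (\<lambda>c e. S $$ (c, e)) (\<lambda>a c. x $ (a*d+c))"
    unfolding QF_def by (simp add: sum_distrib_left algebra_simps)
  finally show ?thesis .
qed

lemma psd_mat_psdf: assumes "psd_mat n G" shows "psdf n (\<lambda>a b. G $$ (a, b))" "symf n (\<lambda>a b. G $$ (a, b))"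
  "symm n G" "G \<in> carrier_mat n n"
proof -
  have G: "G \<in> carrier_mat n n" and t: "transpose_mat G = G" and p: "\<forall>x\<in>carrier_vec n. 0 \<le> x \<bullet> (G *\<^sub>v x)"
    using assms unfolding psd_mat_def by auto
  show "psdf n (\<lambda>a b. G $$ (a, b))" by (rule psdf_of_mat[OF G p])
  have "G $$ (i, j) = G $$ (j, i)" if "i < n" "j < n" for i j
  proof -
    have "G $$ (i, j) = transpose_mat G $$ (i, j)" using t by simp
    also have "\<dots> = G $$ (j, i)" using G that by simp
    finally show ?thesis .
  qed
  then show "symf n (\<lambda>a b. G $$ (a, b))" "symm n G" unfolding symf_def symm_def by auto
  show "G \<in> carrier_mat n n" by fact
qed

lemma kron_psd: assumes "psd_mat N G" "psd_mat d S" "x \<in> carrier_vec (d*N)"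
  shows "0 \<le> x \<bullet> (kron_mat G S *\<^sub>v x)"
  using kron_quad[OF psd_mat_psdf(4)[OF assms(1)] psd_mat_psdf(4)[OF assms(2)] assms(3)]
    kron_psd_fun[OF psd_mat_psdf(1)[OF assms(1)] psd_mat_psdf(1,2)[OF assms(2)]]
  by simp

lemma kron_symm: assumes "psd_mat N G" "psd_mat d S"
  shows "symm (d*N) (kron_mat G S)"
proof -
  have G: "G \<in> carrier_mat N N" "symm N G" and S: "S \<in> carrier_mat d d" "symm d S"
    using psd_mat_psdf assms by auto
  have "i div d < N" if "i < d*N" for i using that
    by (metis div_less_iff_less_mult mult.commute mult_zero_left not_gr0 not_less0)
  moreover have "i mod d < d" if "i < d*N" for i using that
    by (metis mod_less_divisor mult_zero_left not_gr0 not_less0)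
  ultimately show ?thesis unfolding symm_def using G S
    by (auto simp: kron_index symm_def)
qed


lemma inv_exists: fixes A :: "real mat" assumes A: "A \<in> carrier_mat n n" and c: "c > 0"
  and lb: "\<forall>x\<in>carrier_vec n. c * (x \<bullet> x) \<le> x \<bullet> (A *\<^sub>v x)"
  shows "A * mat_inv A = 1\<^sub>m n \<and> mat_inv A \<in> carrier_mat n n"
proof -
  have "det A \<noteq> 0"
  proof
    assume "det A = 0"
    then obtain v where v: "v \<in> carrier_vec n" "v \<noteq> 0\<^sub>v n" "A *\<^sub>v v = 0\<^sub>v n"
      using det_0_iff_vec_prod_zero[OF A] by auto
    have "c * (v \<bullet> v) \<le> v \<bullet> (A *\<^sub>v v)" using lb v by auto
    also have "\<dots> = 0" using v by simp
    finally show False using scal_self_pos[OF v(1,2)] c by (simp add: mult_le_0_iff)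
  qed
  then have U: "A \<in> Units (ring_mat TYPE(real) n ())" by (rule det_non_zero_imp_unit[OF A])
  moreover have "A \<notin> Units (ring_mat TYPE(real) n ())" if "mat_inverse A = None"
    using mat_inverse(1)[OF A that, where b = "()"] by simp
  ultimately obtain Z where Z: "mat_inverse A = Some Z" by (cases "mat_inverse A") auto
  then show ?thesis using mat_inverse(2)[OF A Z] unfolding mat_inv_def by simp
qed

lemma solve_eq: fixes A :: "real mat" assumes "A \<in> carrier_mat n n" "Z \<in> carrier_mat n n" "A * Z = 1\<^sub>m n"
  "r \<in> carrier_vec n"
  shows "A *\<^sub>v (- (Z *\<^sub>v r)) = - r"
proof -
  have "A *\<^sub>v (Z *\<^sub>v r) = r" using assms by (metis assoc_mult_mat_vec one_mult_mat_vec)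
  moreover have "A *\<^sub>v (- (Z *\<^sub>v r)) = - (A *\<^sub>v (Z *\<^sub>v r))"
    using assms by (intro eq_vecI) (auto simp: mv_index sum_negf)
  ultimately show ?thesis by simp
qed

lemma lb_inv: fixes A :: "real mat" assumes A: "A \<in> carrier_mat n n" and c: "c > 0"
  and lb: "\<forall>x\<in>carrier_vec n. c * (x \<bullet> x) \<le> x \<bullet> (A *\<^sub>v x)" and w: "w \<in> carrier_vec n"
  shows "c\<^sup>2 * (w \<bullet> w) \<le> (A *\<^sub>v w) \<bullet> (A *\<^sub>v w)"
proof (cases "w \<bullet> w = 0")
  case True then show ?thesis using self_scal_nonneg[of "A *\<^sub>v w"] by simp
next
  case False
  then have wp: "w \<bullet> w > 0" using self_scal_nonneg[of w] by simp
  have "c * (w \<bullet> w) \<le> w \<bullet> (A *\<^sub>v w)" using lb w by auto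
  then have "(c * (w \<bullet> w))\<^sup>2 \<le> (w \<bullet> (A *\<^sub>v w))\<^sup>2" using c wp
    by (intro power_mono) auto
  also have "\<dots> \<le> (w \<bullet> w) * ((A *\<^sub>v w) \<bullet> (A *\<^sub>v w))" using vec_CS[of w n "A *\<^sub>v w"] A w by simp
  finally have "(c\<^sup>2 * (w \<bullet> w)) * (w \<bullet> w) \<le> ((A *\<^sub>v w) \<bullet> (A *\<^sub>v w)) * (w \<bullet> w)"
    by (simp add: power2_eq_square algebra_simps)
  then show ?thesis using wp by simp
qed

lemma vnorm_tri: fixes a b :: "real vec" assumes "a \<in> carrier_vec n" "b \<in> carrier_vec n"
  shows "vnorm (a + b) \<le> vnorm a + vnorm b"
proof -
  have "(a + b) \<bullet> (a + b) = a \<bullet> a + 2 * (a \<bullet> b) + b \<bullet> b"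
    using assms by (simp add: scal_sum sum.distrib algebra_simps sum_distrib_left)
  also have "a \<bullet> b \<le> vnorm a * vnorm b"
  proof -
    have "(a \<bullet> b)\<^sup>2 \<le> (vnorm a * vnorm b)\<^sup>2"
      using vec_CS[OF assms] self_scal_nonneg[of a] self_scal_nonneg[of b]
      by (simp add: vnorm_def power_mult_distrib)
    then show ?thesis using self_scal_nonneg[of a] self_scal_nonneg[of b]
      by (metis abs_le_square_iff abs_ge_self abs_of_nonneg mult_nonneg_nonneg order_trans real_sqrt_ge_zero vnorm_def)
  qed
  then have "a \<bullet> a + 2 * (a \<bullet> b) + b \<bullet> b \<le> (vnorm a + vnorm b)\<^sup>2"
    using self_scal_nonneg[of a] self_scal_nonneg[of b]
    by (simp add: vnorm_def power2_eq_square algebra_simps)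
  finally have "(a + b) \<bullet> (a + b) \<le> (vnorm a + vnorm b)\<^sup>2" .
  then show ?thesis unfolding vnorm_def
    by (metis real_le_lsqrt add_nonneg_nonneg real_sqrt_ge_zero vnorm_def self_scal_nonneg)
qed

lemma rho_bound: fixes m M eps :: real
  assumes m: "0 < m" "m \<le> M" and e: "0 < eps" "eps < 1"
  shows "(1 - m/M) ^ nat \<lceil>2 * (M/m) * ln (1/eps)\<rceil> \<le> eps\<^sup>2"
proof -
  define K where "K = nat \<lceil>2 * (M/m) * ln (1/eps)\<rceil>"
  have Mp: "M > 0" using m by simp
  have ln: "0 \<le> ln (1/eps)" using e by simp
  have Kge: "2 * (M/m) * ln (1/eps) \<le> real K" unfolding K_def by linarith
  have r0: "0 \<le> 1 - m/M" using m Mp by (simp add: field_simps)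
  have "1 - m/M \<le> exp (- (m/M))" using exp_ge_add_one_self[of "-(m/M)"] by simp
  then have "(1 - m/M) ^ K \<le> exp (- (m/M)) ^ K" using r0 by (intro power_mono) auto
  also have "\<dots> = exp (- (real K * (m/M)))" by (simp add: exp_of_nat_mult[symmetric])
  also have "\<dots> \<le> exp (- (2 * ln (1/eps)))"
  proof -
    have "2 * ln (1/eps) \<le> real K * (m/M)"
    proof -
      have "2 * ln (1/eps) = (2 * (M/m) * ln (1/eps)) * (m/M)" using m Mp by (simp add: field_simps)
      also have "\<dots> \<le> real K * (m/M)" using Kge m Mp by (intro mult_right_mono) auto
      finally show ?thesis .
    qed
    then show ?thesis by simp
  qed
  also have "\<dots> = eps\<^sup>2"
  proof -
    have "- (2 * ln (1/eps)) = 2 * ln eps" using e by (simp add: ln_div)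
    then have "exp (- (2 * ln (1/eps))) = exp (ln eps) ^ 2" by (simp add: exp_of_nat_mult[symmetric])
    then show ?thesis using e by simp
  qed
  finally show ?thesis unfolding K_def .
qed


lemma frob_diff:
  assumes G: "G \<in> carrier_mat N N" and S: "S \<in> carrier_mat d d"
  shows "(frob_norm (kron_mat G S - kron_mat (band_mat G J) S))\<^sup>2 =
    (\<Sum>i<N. \<Sum>j<N. if \<bar>int i - int j\<bar> \<ge> J then (G $$ (i, j))\<^sup>2 else 0) * (frob_norm S)\<^sup>2"
proof -
  have Gb: "band_mat G J \<in> carrier_mat N N" using G unfolding band_mat_def by auto
  have dr: "dim_row (kron_mat G S - kron_mat (band_mat G J) S) = d*N"
    "dim_col (kron_mat G S - kron_mat (band_mat G J) S) = d*N"
    using kron_carrier[OF Gb S] by auto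
  have "(frob_norm (kron_mat G S - kron_mat (band_mat G J) S))\<^sup>2
    = (\<Sum>i<d*N. \<Sum>j<d*N. ((kron_mat G S - kron_mat (band_mat G J) S) $$ (i, j))\<^sup>2)"
    unfolding frob_sq dr ..
  also have "\<dots> = (\<Sum>a<N. \<Sum>b<N. \<Sum>c<d. \<Sum>e<d.
      (if \<bar>int a - int b\<bar> \<ge> J then (G $$ (a, b))\<^sup>2 else 0) * (S $$ (c, e))\<^sup>2)"
  proof -
    have ent: "(kron_mat G S - kron_mat (band_mat G J) S) $$ (a*d+c, b*d+e)
       = (if \<bar>int a - int b\<bar> \<ge> J then G $$ (a, b) else 0) * S $$ (c, e)"
      if "a < N" "b < N" "c < d" "e < d" for a b c e
    proof -
      have i: "a*d+c < d*N" "b*d+e < d*N" using that div_mod_lt by auto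
      have "(kron_mat G S - kron_mat (band_mat G J) S) $$ (a*d+c, b*d+e)
          = kron_mat G S $$ (a*d+c, b*d+e) - kron_mat (band_mat G J) S $$ (a*d+c, b*d+e)"
        using i kron_carrier[OF Gb S] by simp
      also have "\<dots> = G $$ (a, b) * S $$ (c, e) - band_mat G J $$ (a, b) * S $$ (c, e)"
        unfolding kron_index[OF G S i] kron_index[OF Gb S i] using that by simp
      also have "\<dots> = (if \<bar>int a - int b\<bar> \<ge> J then G $$ (a, b) else 0) * S $$ (c, e)"
        using that G unfolding band_mat_def by (auto simp: algebra_simps)
      finally show ?thesis .
    qed
    show ?thesis unfolding double_split
      by (intro sum.cong refl) (simp add: ent power_mult_distrib)
  qed
  also have "\<dots> = (\<Sum>i<N. \<Sum>j<N. if \<bar>int i - int j\<bar> \<ge> J then (G $$ (i, j))\<^sup>2 else 0) * (frob_norm S)\<^sup>2"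
  proof -
    let ?X = "\<lambda>a b. if \<bar>int a - int b\<bar> \<ge> J then (G $$ (a, b))\<^sup>2 else (0::real)"
    let ?Y = "\<lambda>c e. (S $$ (c, e))\<^sup>2"
    have "(\<Sum>a<N. \<Sum>b<N. ?X a b) * (\<Sum>c<d. \<Sum>e<d. ?Y c e) = (\<Sum>a<N. \<Sum>b<N. ?X a b * (\<Sum>c<d. \<Sum>e<d. ?Y c e))"
      by (simp add: sum_distrib_right)
    also have "\<dots> = (\<Sum>a<N. \<Sum>b<N. \<Sum>c<d. \<Sum>e<d. ?X a b * ?Y c e)"
      by (simp add: sum_distrib_left)
    finally show ?thesis unfolding frob_sq using S by simp
  qed
  finally show ?thesis .
qed


theorem lemma1:
  "\<exists>C > 0. \<forall>(N::nat) (d::nat) (\<Gamma>::real mat) (\<Sigma>::real mat) (\<mu>::real vec) (t::real)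
      (v::real vec) (\<epsilon>::real) (J::int).
     N > 0 \<longrightarrow> d > 0 \<longrightarrow> psd_mat N \<Gamma> \<longrightarrow> psd_mat d \<Sigma> \<longrightarrow>
     \<mu> \<in> carrier_vec (d * N) \<longrightarrow> v \<in> carrier_vec (d * N) \<longrightarrow> t > 0 \<longrightarrow>
     0 < \<epsilon> \<longrightarrow> \<epsilon> < 1 \<longrightarrow> J < int N \<longrightarrow> psd_mat N (band_mat \<Gamma> J) \<longrightarrow>
     (let \<alpha> = exp (- t / 2);
          \<sigma> = sqrt (1 - exp (- t));
          r = v - \<alpha> \<cdot>\<^sub>v \<mu>;
          score = - (mat_inv (\<alpha>\<^sup>2 \<cdot>\<^sub>m kron_mat \<Gamma> \<Sigma> + \<sigma>\<^sup>2 \<cdot>\<^sub>m 1\<^sub>m (d * N)) *\<^sub>v r);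
          Abar = \<alpha>\<^sup>2 \<cdot>\<^sub>m kron_mat (band_mat \<Gamma> J) \<Sigma> + \<sigma>\<^sup>2 \<cdot>\<^sub>m 1\<^sub>m (d * N);
          \<kappa> = cond_num Abar
      in \<exists>(\<eta>::real) (K::nat). \<eta> > 0 \<and> real K \<le> C * (1 + \<kappa> * ln (1 / \<epsilon>)) \<and>
           vnorm (gd_iter Abar r \<eta> K - score)
             \<le> vnorm r * \<epsilon> / \<sigma>\<^sup>2
                + frob_norm \<Sigma> * vnorm r / \<sigma> ^ 4 *
                  sqrt (\<Sum>i<N. \<Sum>j<N. if \<bar>int i - int j\<bar> \<ge> J then (\<Gamma> $$ (i, j))\<^sup>2 else 0))"
proof (intro exI[of _ 2] conjI allI impI)
  fix N d :: nat and \<Gamma> \<Sigma> :: "real mat" and \<mu> v :: "real vec" and t \<epsilon> :: real and J :: int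
  assume N: "N > 0" and d: "d > 0" and G: "psd_mat N \<Gamma>" and S: "psd_mat d \<Sigma>"
    and mu: "\<mu> \<in> carrier_vec (d * N)" and vc: "v \<in> carrier_vec (d * N)" and t: "t > 0"
    and e0: "0 < \<epsilon>" and e1: "\<epsilon> < 1" and JN: "J < int N" and Gb: "psd_mat N (band_mat \<Gamma> J)"
  define \<alpha> where "\<alpha> = exp (- t / 2)"
  define \<sigma> where "\<sigma> = sqrt (1 - exp (- t))"
  define r where "r = v - \<alpha> \<cdot>\<^sub>v \<mu>"
  define n where "n = d * N"
  define Kf where "Kf = kron_mat \<Gamma> \<Sigma>"
  define Kb where "Kb = kron_mat (band_mat \<Gamma> J) \<Sigma>"
  define a2 where "a2 = \<alpha>\<^sup>2"
  define s2 where "s2 = \<sigma>\<^sup>2"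
  define Af where "Af = a2 \<cdot>\<^sub>m Kf + s2 \<cdot>\<^sub>m 1\<^sub>m n"
  define Ab where "Ab = a2 \<cdot>\<^sub>m Kb + s2 \<cdot>\<^sub>m 1\<^sub>m n"
  define score where "score = - (mat_inv Af *\<^sub>v r)"
  define \<kappa> where "\<kappa> = cond_num Ab"
  define T where "T = (\<Sum>i<N. \<Sum>j<N. if \<bar>int i - int j\<bar> \<ge> J then (\<Gamma> $$ (i, j))\<^sup>2 else 0)"
  have np: "n > 0" unfolding n_def using N d by simp
  have et: "exp (- t) < 1" using t by simp
  have s2v: "s2 = 1 - exp (- t)" unfolding s2_def \<sigma>_def using et by simp
  have s2p: "s2 > 0" using s2v et by simp
  have a2v: "a2 = exp (- t)" unfolding a2_def \<alpha>_def
    by (simp add: power2_eq_square exp_add[symmetric])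
  have a2p: "0 < a2" "a2 \<le> 1" using a2v t by auto
  have Kfc: "Kf \<in> carrier_mat n n" unfolding Kf_def n_def
    by (rule kron_carrier[OF psd_mat_psdf(4)[OF G] psd_mat_psdf(4)[OF S]])
  have Kbc: "Kb \<in> carrier_mat n n" unfolding Kb_def n_def
    by (rule kron_carrier[OF psd_mat_psdf(4)[OF Gb] psd_mat_psdf(4)[OF S]])
  have Kfp: "\<forall>x\<in>carrier_vec n. 0 \<le> x \<bullet> (Kf *\<^sub>v x)" unfolding Kf_def n_def using kron_psd[OF G S] by auto
  have Kbp: "\<forall>x\<in>carrier_vec n. 0 \<le> x \<bullet> (Kb *\<^sub>v x)" unfolding Kb_def n_def using kron_psd[OF Gb S] by auto
  have Afc: "Af \<in> carrier_mat n n" unfolding Af_def using Kfc by simp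
  have Abc: "Ab \<in> carrier_mat n n" unfolding Ab_def using Kbc by simp
  have Abs: "symm n Ab" unfolding Ab_def n_def Kb_def by (rule lin_symm[OF _ kron_symm[OF Gb S]]) (use Kbc in \<open>simp add: n_def Kb_def\<close>)
  have lbf: "\<forall>x\<in>carrier_vec n. s2 * (x \<bullet> x) \<le> x \<bullet> (Af *\<^sub>v x)"
  proof
    fix x :: "real vec" assume x: "x \<in> carrier_vec n"
    show "s2 * (x \<bullet> x) \<le> x \<bullet> (Af *\<^sub>v x)" unfolding Af_def lin_quad[OF Kfc x]
      using Kfp x a2p by simp
  qed
  have lbb: "\<forall>x\<in>carrier_vec n. s2 * (x \<bullet> x) \<le> x \<bullet> (Ab *\<^sub>v x)"
  proof
    fix x :: "real vec" assume x: "x \<in> carrier_vec n"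
    show "s2 * (x \<bullet> x) \<le> x \<bullet> (Ab *\<^sub>v x)" unfolding Ab_def lin_quad[OF Kbc x]
      using Kbp x a2p by simp
  qed
  have rc: "r \<in> carrier_vec n" unfolding r_def n_def using mu vc by simp
  from inv_exists[OF Afc s2p lbf] have Zf: "Af * mat_inv Af = 1\<^sub>m n" "mat_inv Af \<in> carrier_mat n n" by auto
  from inv_exists[OF Abc s2p lbb] have Zb: "Ab * mat_inv Ab = 1\<^sub>m n" "mat_inv Ab \<in> carrier_mat n n" by auto
  define y where "y = - (mat_inv Ab *\<^sub>v r)"
  have yc: "y \<in> carrier_vec n" unfolding y_def using Zb rc by simp
  have scc: "score \<in> carrier_vec n" unfolding score_def using Zf rc by simp
  have Afs: "Af *\<^sub>v score = - r" unfolding score_def by (rule solve_eq[OF Afc Zf(2,1) rc])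
  have Aby: "Ab *\<^sub>v y = - r" unfolding y_def by (rule solve_eq[OF Abc Zb(2,1) rc])
  have Aby0: "Ab *\<^sub>v y + r = 0\<^sub>v n" using Aby rc Abc by (intro eq_vecI) auto
  define m where "m = Min {l. eigenvalue Ab l}"
  define M where "M = Max {l. eigenvalue Ab l}"
  note eb = eig_bounds[OF Abc np Abs s2p lbb, folded m_def M_def]
  have mp: "0 < m" using eb(1) s2p by simp
  have kap: "\<kappa> = M / m" unfolding \<kappa>_def cond_num_def m_def M_def ..
  define Kit where "Kit = nat \<lceil>2 * (M/m) * ln (1/\<epsilon>)\<rceil>"
  define s where "s = gd_iter Ab r (1/M) Kit"
  have sc: "s \<in> carrier_vec n" unfolding s_def by (rule gd_carrier[OF Abc rc])
  have gd: "(s - y) \<bullet> (s - y) \<le> (1 - m/M)^Kit * (y \<bullet> y)" unfolding s_def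
    by (rule gd_conv[OF Abc Abs mp eb(2) eb(3) eb(4) rc yc Aby0])
  also have "\<dots> \<le> \<epsilon>\<^sup>2 * (y \<bullet> y)" unfolding Kit_def
    by (intro mult_right_mono rho_bound[OF mp eb(2) e0 e1] self_scal_nonneg)
  finally have gd2: "(s - y) \<bullet> (s - y) \<le> \<epsilon>\<^sup>2 * (y \<bullet> y)" .
  have yb: "s2\<^sup>2 * (y \<bullet> y) \<le> r \<bullet> r"
    using lb_inv[OF Abc s2p lbb yc] unfolding Aby using rc by simp
  define w where "w = y - score"
  have wc: "w \<in> carrier_vec n" unfolding w_def using yc scc by simp
  define Dm where "Dm = Kf - Kb"
  have Dmc: "Dm \<in> carrier_mat n n" unfolding Dm_def using Kbc by (rule minus_carrier_mat)
  have Afw: "Af *\<^sub>v w = a2 \<cdot>\<^sub>v (Dm *\<^sub>v y)"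
  proof -
    have "Af *\<^sub>v w = Af *\<^sub>v y - Af *\<^sub>v score" unfolding w_def
      by (rule mult_minus_distrib_mat_vec[OF Afc yc scc])
    also have "\<dots> = Af *\<^sub>v y - Ab *\<^sub>v y" unfolding Afs Aby ..
    also have "\<dots> = a2 \<cdot>\<^sub>v (Dm *\<^sub>v y)"
      unfolding Af_def Ab_def lin_mv[OF Kfc yc] lin_mv[OF Kbc yc] Dm_def
      using Kfc Kbc yc
      by (intro eq_vecI) (auto simp: mv_index algebra_simps sum_subtractf sum_distrib_left)
    finally show ?thesis .
  qed
  have "s2\<^sup>2 * (w \<bullet> w) \<le> (Af *\<^sub>v w) \<bullet> (Af *\<^sub>v w)" by (rule lb_inv[OF Afc s2p lbf wc])
  also have "\<dots> = a2\<^sup>2 * ((Dm *\<^sub>v y) \<bullet> (Dm *\<^sub>v y))" unfolding Afw using Dmc yc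
    by (simp add: power2_eq_square)
  also have "\<dots> \<le> 1 * ((frob_norm Dm)\<^sup>2 * (y \<bullet> y))"
    using a2p mv_bound[OF Dmc yc] self_scal_nonneg[of "Dm *\<^sub>v y"]
    by (intro mult_mono) (auto simp: power_le_one)
  also have "(frob_norm Dm)\<^sup>2 = T * (frob_norm \<Sigma>)\<^sup>2" unfolding Dm_def Kf_def Kb_def T_def
    by (rule frob_diff[OF psd_mat_psdf(4)[OF G] psd_mat_psdf(4)[OF S]])
  finally have wb: "s2\<^sup>2 * (w \<bullet> w) \<le> T * (frob_norm \<Sigma>)\<^sup>2 * (y \<bullet> y)" by simp
  have T0: "0 \<le> T" unfolding T_def by (intro sum_nonneg) auto
  have F0: "0 \<le> frob_norm \<Sigma>" unfolding frob_norm_def by (simp add: sum_nonneg)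
  have "s2\<^sup>2 * (s2\<^sup>2 * (w \<bullet> w)) \<le> s2\<^sup>2 * (T * (frob_norm \<Sigma>)\<^sup>2 * (y \<bullet> y))"
    using wb by (intro mult_left_mono) auto
  also have "\<dots> = T * (frob_norm \<Sigma>)\<^sup>2 * (s2\<^sup>2 * (y \<bullet> y))" by simp
  also have "\<dots> \<le> T * (frob_norm \<Sigma>)\<^sup>2 * (r \<bullet> r)" using yb T0 by (intro mult_left_mono) auto
  finally have wb2: "(s2\<^sup>2)\<^sup>2 * (w \<bullet> w) \<le> (sqrt T * frob_norm \<Sigma>)\<^sup>2 * (r \<bullet> r)"
    using T0 by (simp add: power2_eq_square algebra_simps)
  have vw: "s2\<^sup>2 * vnorm w \<le> sqrt T * frob_norm \<Sigma> * vnorm r"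
  proof -
    have "sqrt ((s2\<^sup>2)\<^sup>2 * (w \<bullet> w)) \<le> sqrt ((sqrt T * frob_norm \<Sigma>)\<^sup>2 * (r \<bullet> r))"
      using wb2 by (rule real_sqrt_le_mono)
    then show ?thesis unfolding vnorm_def real_sqrt_mult real_sqrt_abs using s2p T0 F0 by simp
  qed
  have vy: "s2 * vnorm y \<le> vnorm r"
  proof -
    have "sqrt (s2\<^sup>2 * (y \<bullet> y)) \<le> sqrt (r \<bullet> r)" using yb by (rule real_sqrt_le_mono)
    then show ?thesis unfolding vnorm_def real_sqrt_mult using s2p by simp
  qed
  have vsy: "vnorm (s - y) \<le> \<epsilon> * vnorm y"
  proof -
    have "sqrt ((s - y) \<bullet> (s - y)) \<le> sqrt (\<epsilon>\<^sup>2 * (y \<bullet> y))" using gd2 by (rule real_sqrt_le_mono)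
    then show ?thesis unfolding vnorm_def real_sqrt_mult using e0 by simp
  qed
  have split: "s - score = (s - y) + w" unfolding w_def using sc yc scc
    by (intro eq_vecI) auto
  have "vnorm (s - score) \<le> vnorm (s - y) + vnorm w" unfolding split
    by (rule vnorm_tri[of _ n]) (use sc yc wc in auto)
  also have "\<dots> \<le> vnorm r * \<epsilon> / s2 + frob_norm \<Sigma> * vnorm r / s2\<^sup>2 * sqrt T"
  proof -
    have "vnorm y \<le> vnorm r / s2" using vy s2p by (simp add: field_simps mult.commute)
    then have "\<epsilon> * vnorm y \<le> \<epsilon> * (vnorm r / s2)" using e0 by (intro mult_left_mono) auto
    then have "vnorm (s - y) \<le> vnorm r * \<epsilon> / s2" using vsy by (simp add: mult.commute)
    moreover have "vnorm w \<le> frob_norm \<Sigma> * vnorm r / s2\<^sup>2 * sqrt T"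
      using vw s2p by (simp add: field_simps)
    ultimately show ?thesis by simp
  qed
  finally have main: "vnorm (s - score) \<le> vnorm r * \<epsilon> / s2 + frob_norm \<Sigma> * vnorm r / s2\<^sup>2 * sqrt T" .
  have Mp: "M > 0" using mp eb(2) by simp
  have Kb2: "real Kit \<le> 2 * (1 + \<kappa> * ln (1 / \<epsilon>))"
  proof -
    have "0 \<le> \<kappa> * ln (1/\<epsilon>)" unfolding kap using mp Mp e0 e1 by simp
    moreover have "real Kit \<le> 2 * (M/m) * ln (1/\<epsilon>) + 1" unfolding Kit_def
      using \<open>0 \<le> \<kappa> * ln (1/\<epsilon>)\<close> unfolding kap by linarith
    ultimately show ?thesis unfolding kap by simp
  qed
  have final: "\<exists>(\<eta>::real) (K::nat). \<eta> > 0 \<and> real K \<le> 2 * (1 + \<kappa> * ln (1 / \<epsilon>)) \<and>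
           vnorm (gd_iter Ab r \<eta> K - score)
             \<le> vnorm r * \<epsilon> / \<sigma>\<^sup>2 + frob_norm \<Sigma> * vnorm r / \<sigma> ^ 4 * sqrt T"
  proof -
    have p4: "\<sigma> ^ 4 = s2\<^sup>2" unfolding s2_def by (simp add: eval_nat_numeral)
    show ?thesis
      apply (rule exI[of _ "1/M"], rule exI[of _ Kit])
      using Mp Kb2 main unfolding s_def p4 s2_def by simp
  qed
  show "let \<alpha> = exp (- t / 2);
          \<sigma> = sqrt (1 - exp (- t));
          r = v - \<alpha> \<cdot>\<^sub>v \<mu>;
          score = - (mat_inv (\<alpha>\<^sup>2 \<cdot>\<^sub>m kron_mat \<Gamma> \<Sigma> + \<sigma>\<^sup>2 \<cdot>\<^sub>m 1\<^sub>m (d * N)) *\<^sub>v r);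
          Abar = \<alpha>\<^sup>2 \<cdot>\<^sub>m kron_mat (band_mat \<Gamma> J) \<Sigma> + \<sigma>\<^sup>2 \<cdot>\<^sub>m 1\<^sub>m (d * N);
          \<kappa> = cond_num Abar
      in \<exists>(\<eta>::real) (K::nat). \<eta> > 0 \<and> real K \<le> 2 * (1 + \<kappa> * ln (1 / \<epsilon>)) \<and>
           vnorm (gd_iter Abar r \<eta> K - score)
             \<le> vnorm r * \<epsilon> / \<sigma>\<^sup>2
                + frob_norm \<Sigma> * vnorm r / \<sigma> ^ 4 *
                  sqrt (\<Sum>i<N. \<Sum>j<N. if \<bar>int i - int j\<bar> \<ge> J then (\<Gamma> $$ (i, j))\<^sup>2 else 0)"
    unfolding Let_def using final
    unfolding \<alpha>_def \<sigma>_def r_def n_def Kf_def Kb_def a2_def s2_def Af_def Ab_def score_def \<kappa>_def T_def .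
qed (simp)

end
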